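(* Let $P$ be a reversible ergodic Markov chain on a finite set $X$ with stationary distribution $\pi$, let $S,M\subseteq X$ be disjoint and nonempty, $\sigma=\pi|_S$, and $q=(q_S,q_M)\in[0,1)^2$. Let $(Y_i(q))_{i\ge0}$ be the Markov chain with transition matrix $P(q)$ and $Y_0(q)\sim\sigma$, and let $D(q)$ be the discriminant matrix of $P(q)$. Then for all $t,t'\in\mathbb N$ with $t'>t$, \[ \big\|\Pi_M D(q)^t|\sqrt\sigma\rangle\big\|\ \ge\ \Pr\big(Y_t(q)\in M,\ Y_{t'}(q)\in S\big). \]
   Context: $(\pi|_S)_u=\pi_u/\pi(S)$ for $u\in S$ and $0$ otherwise; $|\sqrt\sigma\rangle=\sum_u\sqrt{\sigma_u}|u\rangle$. The interpolated chain is $P(q)_{u,v}=(1-q_S)P_{u,v}+q_S\delta_{uv}$ if $u\in S$, $(1-q_M)P_{u,v}+q_M\delta_{uv}$ if $u\in M$, and $P_{u,v}$ otherwise. The discriminant matrix of a reversible chain $Q$ is $D(Q)=\sqrt{Q\circ Q^T}$ (entrywise). $\Pi_M=\sum_{u\in M}|u\rangle\langle u|$. *)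

theory Defs
  imports Complex_Main
begin

definition mmult :: "('a::finite \<Rightarrow> 'a \<Rightarrow> real) \<Rightarrow> ('a \<Rightarrow> 'a \<Rightarrow> real) \<Rightarrow> 'a \<Rightarrow> 'a \<Rightarrow> real" where
  "mmult A B u v = (\<Sum>w\<in>UNIV. A u w * B w v)"

definition mvec :: "('a::finite \<Rightarrow> 'a \<Rightarrow> real) \<Rightarrow> ('a \<Rightarrow> real) \<Rightarrow> 'a \<Rightarrow> real" where
  "mvec A x u = (\<Sum>w\<in>UNIV. A u w * x w)"

fun mpow :: "('a::finite \<Rightarrow> 'a \<Rightarrow> real) \<Rightarrow> nat \<Rightarrow> 'a \<Rightarrow> 'a \<Rightarrow> real" where
  "mpow A 0 = (\<lambda>u v. if u = v then 1 else 0)"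
| "mpow A (Suc n) = mmult (mpow A n) A"

definition stochastic :: "('a::finite \<Rightarrow> 'a \<Rightarrow> real) \<Rightarrow> bool" where
  "stochastic P \<longleftrightarrow> (\<forall>u v. 0 \<le> P u v) \<and> (\<forall>u. (\<Sum>v\<in>UNIV. P u v) = 1)"

definition irreducible_chain :: "('a::finite \<Rightarrow> 'a \<Rightarrow> real) \<Rightarrow> bool" where
  "irreducible_chain P \<longleftrightarrow> (\<forall>u v. \<exists>n>0. mpow P n u v > 0)"

definition aperiodic_chain :: "('a::finite \<Rightarrow> 'a \<Rightarrow> real) \<Rightarrow> bool" where
  "aperiodic_chain P \<longleftrightarrow> (\<forall>u. Gcd {n. n > 0 \<and> mpow P n u u > 0} = 1)"

definition ergodic_chain :: "('a::finite \<Rightarrow> 'a \<Rightarrow> real) \<Rightarrow> bool" where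
  "ergodic_chain P \<longleftrightarrow> stochastic P \<and> irreducible_chain P \<and> aperiodic_chain P"

definition stationary_dist :: "('a::finite \<Rightarrow> 'a \<Rightarrow> real) \<Rightarrow> ('a \<Rightarrow> real) \<Rightarrow> bool" where
  "stationary_dist P \<mu> \<longleftrightarrow> (\<forall>u. 0 \<le> \<mu> u) \<and> (\<Sum>u\<in>UNIV. \<mu> u) = 1
     \<and> (\<forall>v. (\<Sum>u\<in>UNIV. \<mu> u * P u v) = \<mu> v)"

definition reversible_wrt :: "('a::finite \<Rightarrow> 'a \<Rightarrow> real) \<Rightarrow> ('a \<Rightarrow> real) \<Rightarrow> bool" where
  "reversible_wrt P \<mu> \<longleftrightarrow> (\<forall>u v. \<mu> u * P u v = \<mu> v * P v u)"

definition restrict_dist :: "('a::finite \<Rightarrow> real) \<Rightarrow> 'a set \<Rightarrow> 'a \<Rightarrow> real" where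
  "restrict_dist \<mu> S u = (if u \<in> S then \<mu> u / (\<Sum>w\<in>S. \<mu> w) else 0)"

definition interp_chain :: "('a::finite \<Rightarrow> 'a \<Rightarrow> real) \<Rightarrow> 'a set \<Rightarrow> 'a set \<Rightarrow> real \<Rightarrow> real \<Rightarrow> 'a \<Rightarrow> 'a \<Rightarrow> real" where
  "interp_chain P S M qS qM u v =
     (if u \<in> S then (1 - qS) * P u v + qS * (if u = v then 1 else 0)
      else if u \<in> M then (1 - qM) * P u v + qM * (if u = v then 1 else 0)
      else P u v)"

definition discriminant :: "('a::finite \<Rightarrow> 'a \<Rightarrow> real) \<Rightarrow> 'a \<Rightarrow> 'a \<Rightarrow> real" where
  "discriminant Q u v = sqrt (Q u v * Q v u)"

definition sqrt_vec :: "('a::finite \<Rightarrow> real) \<Rightarrow> 'a \<Rightarrow> real" where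
  "sqrt_vec s u = sqrt (s u)"

definition proj_norm :: "'a set \<Rightarrow> ('a::finite \<Rightarrow> real) \<Rightarrow> real" where
  "proj_norm M x = sqrt (\<Sum>u\<in>M. (x u)^2)"

text \<open>Pr(Y_t in A, Y_t' in B) for the Markov chain with transition matrix Q and
  initial law mu, t < t' (finite-dimensional distribution of the chain).\<close>
definition chain_prob2 :: "('a::finite \<Rightarrow> 'a \<Rightarrow> real) \<Rightarrow> ('a \<Rightarrow> real) \<Rightarrow> nat \<Rightarrow> 'a set \<Rightarrow> nat \<Rightarrow> 'a set \<Rightarrow> real" where
  "chain_prob2 Q mu t A t' B =
     (\<Sum>u\<in>UNIV. \<Sum>v\<in>A. \<Sum>w\<in>B. mu u * mpow Q t u v * mpow Q (t' - t) v w)"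

end

theory Submission
  imports Defs
begin

lemma mmult_assoc: "mmult (mmult A B) C = mmult A (mmult B C)"
proof (rule ext, rule ext)
  fix u v
  have "mmult (mmult A B) C u v = (\<Sum>y\<in>UNIV. \<Sum>x\<in>UNIV. A u x * B x y * C y v)"
    unfolding mmult_def by (simp add: sum_distrib_right)
  also have "\<dots> = (\<Sum>x\<in>UNIV. \<Sum>y\<in>UNIV. A u x * B x y * C y v)"
    by (rule sum.swap)
  also have "\<dots> = mmult A (mmult B C) u v"
    unfolding mmult_def by (simp add: sum_distrib_left mult.assoc)
  finally show "mmult (mmult A B) C u v = mmult A (mmult B C) u v" .
qed

lemma mmult_id_left: "mmult (\<lambda>u v. if u = v then 1 else 0) A = A"
proof (rule ext, rule ext)
  fix u v
  have "mmult (\<lambda>u v. if u = v then 1 else 0) A u v = (\<Sum>w\<in>UNIV. if u = w then A w v else 0)"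
    unfolding mmult_def by (rule sum.cong) auto
  then show "mmult (\<lambda>u v. if u = v then 1 else 0) A u v = A u v" by simp
qed

lemma mmult_id_right: "mmult A (\<lambda>u v. if u = v then 1 else 0) = A"
  unfolding mmult_def by (rule ext, rule ext) (simp add: mult.commute[of _ "if _ then _ else _"] if_distrib cong: if_cong)

lemma sum_delta_mult: "(\<Sum>v\<in>(UNIV::'a::finite set). c * (if u = v then 1 else 0)) = (c::real)"
proof -
  have "(\<Sum>v\<in>(UNIV::'a set). c * (if u = v then 1 else 0)) = (\<Sum>v\<in>(UNIV::'a set). if u = v then c else 0)"
    by (rule sum.cong) auto
  then show ?thesis by simp
qed

lemma mpow_Suc': "mpow A (Suc n) = mmult A (mpow A n)"
proof (induction n)
  case 0 then show ?case by (simp add: mmult_id_left mmult_id_right)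
next
  case (Suc n)
  have "mpow A (Suc (Suc n)) = mmult (mpow A (Suc n)) A" by simp
  also have "\<dots> = mmult (mmult A (mpow A n)) A" using Suc by simp
  also have "\<dots> = mmult A (mpow A (Suc n))" by (simp add: mmult_assoc)
  finally show ?case .
qed

lemma mpow_nonneg: "(\<And>u v. 0 \<le> A u v) \<Longrightarrow> 0 \<le> mpow A n u v"
  by (induction n arbitrary: u v) (auto simp: mmult_def intro!: sum_nonneg)

lemma mpow_rowsum:
  assumes "\<And>u. (\<Sum>v\<in>UNIV. A u v) = 1"
  shows "(\<Sum>v\<in>UNIV. mpow A n u v) = 1"
proof (induction n arbitrary: u)
  case 0 then show ?case by simp
next
  case (Suc n)
  have "(\<Sum>v\<in>UNIV. mpow A (Suc n) u v) = (\<Sum>v\<in>UNIV. \<Sum>x\<in>UNIV. mpow A n u x * A x v)"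
    by (simp add: mmult_def)
  also have "\<dots> = (\<Sum>x\<in>UNIV. \<Sum>v\<in>UNIV. mpow A n u x * A x v)"
    by (rule sum.swap)
  also have "\<dots> = (\<Sum>x\<in>UNIV. mpow A n u x * (\<Sum>v\<in>UNIV. A x v))"
    by (simp add: sum_distrib_left)
  also have "\<dots> = 1" using assms Suc by simp
  finally show ?case .
qed

lemma mpow_stat:
  assumes "\<And>v. (\<Sum>u\<in>UNIV. \<mu> u * A u v) = \<mu> v"
  shows "(\<Sum>u\<in>UNIV. \<mu> u * mpow A n u v) = \<mu> v"
proof (induction n arbitrary: v)
  case 0 then show ?case by (simp add: if_distrib cong: if_cong)
next
  case (Suc n)
  have "(\<Sum>u\<in>UNIV. \<mu> u * mpow A (Suc n) u v) = (\<Sum>u\<in>UNIV. \<Sum>x\<in>UNIV. \<mu> u * mpow A n u x * A x v)"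
    by (simp add: mmult_def sum_distrib_left mult.assoc)
  also have "\<dots> = (\<Sum>x\<in>UNIV. \<Sum>u\<in>UNIV. \<mu> u * mpow A n u x * A x v)"
    by (rule sum.swap)
  also have "\<dots> = (\<Sum>x\<in>UNIV. (\<Sum>u\<in>UNIV. \<mu> u * mpow A n u x) * A x v)"
    by (simp add: sum_distrib_right)
  also have "\<dots> = \<mu> v" using assms Suc by simp
  finally show ?case .
qed

lemma mpow_rev:
  assumes "\<And>u v. w u * A u v = w v * A v u"
  shows "w u * mpow A n u v = w v * mpow A n v u"
proof (induction n arbitrary: u v)
  case 0 then show ?case by simp
next
  case (Suc n)
  have "w u * mpow A (Suc n) u v = (\<Sum>x\<in>UNIV. (w u * mpow A n u x) * A x v)"
    by (simp add: mmult_def sum_distrib_left mult.assoc)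
  also have "\<dots> = (\<Sum>x\<in>UNIV. mpow A n x u * (w x * A x v))"
    using Suc by (simp add: mult_ac)
  also have "\<dots> = (\<Sum>x\<in>UNIV. mpow A n x u * (w v * A v x))"
    by (rule sum.cong[OF refl]) (subst assms, rule refl)
  also have "\<dots> = w v * mmult A (mpow A n) v u"
    by (simp add: mmult_def sum_distrib_left mult_ac)
  also have "\<dots> = w v * mpow A (Suc n) v u" by (simp only: mpow_Suc')
  finally show ?case .
qed

lemma mpow_D:
  assumes wpos: "\<And>u. w u > 0"
    and D: "\<And>u v. D u v = sqrt (w u) * A u v / sqrt (w v)"
  shows "mpow D n u v = sqrt (w u) * mpow A n u v / sqrt (w v)"
proof (induction n arbitrary: u v)
  case 0 then show ?case using wpos[of u] by (cases "u = v") auto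
next
  case (Suc n)
  have "mpow D (Suc n) u v = (\<Sum>x\<in>UNIV. (sqrt (w u) * mpow A n u x / sqrt (w x)) * (sqrt (w x) * A x v / sqrt (w v)))"
    unfolding mpow.simps mmult_def by (rule sum.cong[OF refl]) (simp only: Suc.IH D)
  also have "\<dots> = (\<Sum>x\<in>UNIV. sqrt (w u) / sqrt (w v) * (mpow A n u x * A x v))"
  proof (rule sum.cong[OF refl])
    fix x
    have "sqrt (w x) \<noteq> 0" using wpos[of x] by simp
    then show "(sqrt (w u) * mpow A n u x / sqrt (w x)) * (sqrt (w x) * A x v / sqrt (w v)) =
       sqrt (w u) / sqrt (w v) * (mpow A n u x * A x v)" by (simp add: field_simps)
  qed
  also have "\<dots> = sqrt (w u) / sqrt (w v) * (\<Sum>x\<in>UNIV. mpow A n u x * A x v)"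
    by (rule sum_distrib_left[symmetric])
  also have "\<dots> = sqrt (w u) * mpow A (Suc n) u v / sqrt (w v)"
    by (simp add: mmult_def)
  finally show ?case .
qed

lemma cs_sum:
  fixes a b :: "'b \<Rightarrow> real"
  shows "(\<Sum>i\<in>I. a i * b i)^2 \<le> (\<Sum>i\<in>I. (a i)^2) * (\<Sum>i\<in>I. (b i)^2)"
proof -
  let ?A = "\<Sum>i\<in>I. (a i)^2" and ?B = "\<Sum>i\<in>I. (b i)^2" and ?C = "\<Sum>i\<in>I. a i * b i"
  have e1: "(\<Sum>i\<in>I. \<Sum>j\<in>I. (a i)^2 * (b j)^2) = ?A * ?B"
    by (simp add: sum_product)
  have e2: "(\<Sum>i\<in>I. \<Sum>j\<in>I. (a j)^2 * (b i)^2) = ?A * ?B"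
    using sum.swap[of "\<lambda>i j. (a j)^2 * (b i)^2" I I] e1 by simp
  have e3: "(\<Sum>i\<in>I. \<Sum>j\<in>I. (a i * b i) * (a j * b j)) = ?C^2"
    by (simp add: sum_product power2_eq_square)
  have "0 \<le> (\<Sum>i\<in>I. \<Sum>j\<in>I. (a i * b j - a j * b i)^2)" by (intro sum_nonneg) simp
  also have "\<dots> = (\<Sum>i\<in>I. \<Sum>j\<in>I. (a i)^2 * (b j)^2 + (a j)^2 * (b i)^2 - 2 * ((a i * b i) * (a j * b j)))"
    by (intro sum.cong refl) (simp add: power2_eq_square algebra_simps)
  also have "\<dots> = (\<Sum>i\<in>I. \<Sum>j\<in>I. (a i)^2 * (b j)^2) + (\<Sum>i\<in>I. \<Sum>j\<in>I. (a j)^2 * (b i)^2)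
        - 2 * (\<Sum>i\<in>I. \<Sum>j\<in>I. (a i * b i) * (a j * b j))"
    by (simp add: sum_subtractf sum.distrib sum_distrib_left)
  also have "\<dots> = 2 * (?A * ?B) - 2 * ?C^2" by (simp only: e1 e2 e3)
  finally show ?thesis by simp
qed

theorem mainTheorem11:
  fixes P :: "'a::finite \<Rightarrow> 'a \<Rightarrow> real" and \<pi>\<^sub>0 :: "'a \<Rightarrow> real"
    and S M :: "'a set" and qS qM :: real and t t' :: nat
  assumes "ergodic_chain P"
    and "stationary_dist P \<pi>\<^sub>0"
    and "reversible_wrt P \<pi>\<^sub>0"
    and "S \<inter> M = {}" and "S \<noteq> {}" and "M \<noteq> {}"
    and "0 \<le> qS" and "qS < 1" and "0 \<le> qM" and "qM < 1"
    and "t < t'"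
  shows "proj_norm M (mvec (mpow (discriminant (interp_chain P S M qS qM)) t)
                          (sqrt_vec (restrict_dist \<pi>\<^sub>0 S)))
         \<ge> chain_prob2 (interp_chain P S M qS qM) (restrict_dist \<pi>\<^sub>0 S) t M t' S"
proof -
  note erg = assms(1)[unfolded ergodic_chain_def stochastic_def irreducible_chain_def]
  have Pnn: "\<And>u v. 0 \<le> P u v" and Prow: "\<And>u. (\<Sum>v\<in>UNIV. P u v) = 1"
    and Pirr: "\<And>u v. \<exists>n>0. mpow P n u v > 0" using erg by auto
  have pinn: "\<And>u. 0 \<le> \<pi>\<^sub>0 u" and pisum: "(\<Sum>u\<in>UNIV. \<pi>\<^sub>0 u) = 1"
    and pistat: "\<And>v. (\<Sum>u\<in>UNIV. \<pi>\<^sub>0 u * P u v) = \<pi>\<^sub>0 v"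
    using assms(2) unfolding stationary_dist_def by auto
  have pirev: "\<And>u v. \<pi>\<^sub>0 u * P u v = \<pi>\<^sub>0 v * P v u"
    using assms(3) unfolding reversible_wrt_def by auto
  obtain u0 where u0: "\<pi>\<^sub>0 u0 > 0"
  proof -
    have "\<exists>u. \<pi>\<^sub>0 u > 0"
    proof (rule ccontr)
      assume "\<not> ?thesis"
      then have "\<And>u. \<pi>\<^sub>0 u = 0" using pinn by (metis antisym not_le)
      then show False using pisum by simp
    qed
    then show ?thesis using that by blast
  qed
  have pipos: "\<pi>\<^sub>0 v > 0" for v
  proof -
    obtain n where n: "mpow P n u0 v > 0" using Pirr by blast
    have "\<pi>\<^sub>0 u0 * mpow P n u0 v \<le> (\<Sum>u\<in>UNIV. \<pi>\<^sub>0 u * mpow P n u v)"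
      by (rule member_le_sum) (auto intro!: mult_nonneg_nonneg pinn mpow_nonneg Pnn)
    also have "\<dots> = \<pi>\<^sub>0 v" by (rule mpow_stat) (rule pistat)
    finally show ?thesis using u0 n by (smt (verit) mult_pos_pos)
  qed
  define q where "q u = (if u \<in> S then qS else if u \<in> M then qM else 0)" for u
  have q0: "0 \<le> q u" and q1: "q u < 1" for u using assms(7-10) by (auto simp: q_def)
  define Q where "Q = interp_chain P S M qS qM"
  have Qeq: "Q u v = (1 - q u) * P u v + q u * (if u = v then 1 else 0)" for u v
    by (simp add: Q_def interp_chain_def q_def)
  have Qnn: "0 \<le> Q u v" for u v
    unfolding Qeq using q0[of u] q1[of u] Pnn[of u v] by auto
  have Qrow: "(\<Sum>v\<in>UNIV. Q u v) = 1" for u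
  proof -
    have "(\<Sum>v\<in>UNIV. Q u v) = (1 - q u) * (\<Sum>v\<in>UNIV. P u v) + q u"
      unfolding Qeq sum.distrib sum_delta_mult by (simp add: sum_distrib_left)
    also have "\<dots> = 1" using Prow by simp
    finally show ?thesis .
  qed
  define w where "w u = \<pi>\<^sub>0 u / (1 - q u)" for u
  have wpos: "w u > 0" for u using pipos[of u] q1[of u] by (simp add: w_def)
  have Qrev: "w u * Q u v = w v * Q v u" for u v
  proof (cases "u = v")
    case False
    have "w u * Q u v = \<pi>\<^sub>0 u * P u v" using False q1[of u] by (simp add: Qeq w_def)
    moreover have "w v * Q v u = \<pi>\<^sub>0 v * P v u" using False q1[of v] by (simp add: Qeq w_def)
    ultimately show ?thesis using pirev by simp
  qed simp
  define D where "D = discriminant Q"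
  have Deq: "D u v = sqrt (w u) * Q u v / sqrt (w v)" for u v
  proof -
    have "Q v u = w u * Q u v / w v" using Qrev[of u v] wpos[of v] by (simp add: field_simps)
    then have "Q u v * Q v u = (Q u v)^2 * (w u / w v)" by (simp add: power2_eq_square)
    then have "D u v = sqrt ((Q u v)^2 * (w u / w v))" by (simp only: D_def discriminant_def)
    also have "\<dots> = sqrt ((Q u v)^2) * sqrt (w u / w v)" by (rule real_sqrt_mult)
    finally have "D u v = sqrt ((Q u v)^2) * sqrt (w u / w v)" .
    also have "\<dots> = sqrt (w u) * Q u v / sqrt (w v)" using Qnn[of u v] by (simp add: real_sqrt_divide)
    finally show ?thesis .
  qed
  have Qrevpow: "w a * mpow Q n a b = w b * mpow Q n b a" for n a b
    by (rule mpow_rev) (rule Qrev)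
  have Dp: "mpow D n a b = sqrt (w a) * mpow Q n a b / sqrt (w b)" for n a b
    by (rule mpow_D) (rule wpos, rule Deq)
  define \<sigma> where "\<sigma> = restrict_dist \<pi>\<^sub>0 S"
  define ps where "ps = (\<Sum>u\<in>S. \<pi>\<^sub>0 u)"
  have pspos: "ps > 0" unfolding ps_def using assms(5) pipos
    by (intro sum_pos) auto
  define c where "c = sqrt (ps / (1 - qS))"
  have cpos: "c > 0" using pspos assms(8) by (simp add: c_def)
  define s where "s = t' - t"
  define p where "p v = (\<Sum>u\<in>UNIV. \<sigma> u * mpow Q t u v)" for v
  define r where "r v = (\<Sum>x\<in>S. mpow Q s v x)" for v
  have r0: "0 \<le> r v" for v unfolding r_def by (intro sum_nonneg mpow_nonneg Qnn)
  have r1: "r v \<le> 1" for v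
  proof -
    have "r v \<le> (\<Sum>x\<in>UNIV. mpow Q s v x)" unfolding r_def
      by (rule sum_mono2) (auto intro: mpow_nonneg Qnn)
    then show ?thesis using mpow_rowsum[OF Qrow] by simp
  qed
  have sw: "sqrt (w u) * sqrt (\<sigma> u) = c * \<sigma> u" for u
  proof (cases "u \<in> S")
    case True
    have "(c * \<sigma> u)^2 = w u * \<sigma> u"
      using True pspos assms(8) pipos[of u]
      by (simp add: c_def \<sigma>_def restrict_dist_def w_def q_def ps_def power2_eq_square field_simps)
    moreover have "0 \<le> c * \<sigma> u" using cpos pipos[of u] pspos
      by (simp add: \<sigma>_def restrict_dist_def ps_def)
    ultimately show ?thesis by (metis real_sqrt_mult real_sqrt_unique)
  next
    case False then show ?thesis by (simp add: \<sigma>_def restrict_dist_def)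
  qed
  have xeq: "mvec (mpow D t) (sqrt_vec \<sigma>) v = c * p v / sqrt (w v)" for v
  proof -
    have "mvec (mpow D t) (sqrt_vec \<sigma>) v = (\<Sum>u\<in>UNIV. sqrt (w v) * mpow Q t v u / sqrt (w u) * sqrt (\<sigma> u))"
      unfolding mvec_def sqrt_vec_def Dp by simp
    also have "\<dots> = (\<Sum>u\<in>UNIV. c / sqrt (w v) * (\<sigma> u * mpow Q t u v))"
    proof (rule sum.cong[OF refl])
      fix u
      have e: "mpow Q t v u = w u * mpow Q t u v / w v"
      proof -
        have "w v * mpow Q t v u = w u * mpow Q t u v" by (rule mpow_rev) (rule Qrev)
        then show ?thesis using wpos[of v] by (simp add: field_simps)
      qed
      have wv: "w v = sqrt (w v) * sqrt (w v)" and wu: "w u = sqrt (w u) * sqrt (w u)"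
        using wpos[of v] wpos[of u] by (simp_all add: less_imp_le)
      have "sqrt (w v) * mpow Q t v u / sqrt (w u) * sqrt (\<sigma> u)
          = sqrt (w v) * (sqrt (w u) * sqrt (w u) * mpow Q t u v / (sqrt (w v) * sqrt (w v))) / sqrt (w u) * sqrt (\<sigma> u)"
        using e wv wu by metis
      also have "\<dots> = (sqrt (w u) * sqrt (\<sigma> u)) / sqrt (w v) * mpow Q t u v"
        using wpos[of v] wpos[of u] by (simp add: field_simps)
      also have "\<dots> = c / sqrt (w v) * (\<sigma> u * mpow Q t u v)" by (simp add: sw)
      finally show "sqrt (w v) * mpow Q t v u / sqrt (w u) * sqrt (\<sigma> u) = c / sqrt (w v) * (\<sigma> u * mpow Q t u v)" .
    qed
    also have "\<dots> = c / sqrt (w v) * p v" unfolding p_def by (rule sum_distrib_left[symmetric])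
    also have "\<dots> = c * p v / sqrt (w v)" by simp
    finally show ?thesis .
  qed
  define A where "A = (\<Sum>v\<in>M. (p v / sqrt (w v))^2)"
  have A0: "0 \<le> A" unfolding A_def by (simp add: sum_nonneg)
  have LHS: "proj_norm M (mvec (mpow D t) (sqrt_vec \<sigma>)) = sqrt (c^2 * A)"
    unfolding proj_norm_def xeq A_def by (simp add: sum_distrib_left power_mult_distrib power_divide)
  have RHS: "chain_prob2 Q \<sigma> t M t' S = (\<Sum>v\<in>M. p v * r v)"
  proof -
    have "chain_prob2 Q \<sigma> t M t' S = (\<Sum>u\<in>UNIV. \<Sum>v\<in>M. \<sigma> u * mpow Q t u v * r v)"
      unfolding chain_prob2_def r_def s_def by (simp add: sum_distrib_left)
    also have "\<dots> = (\<Sum>v\<in>M. \<Sum>u\<in>UNIV. \<sigma> u * mpow Q t u v * r v)"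
      by (rule sum.swap)
    also have "\<dots> = (\<Sum>v\<in>M. p v * r v)"
      unfolding p_def by (simp add: sum_distrib_right)
    finally show ?thesis .
  qed
  define B where "B = (\<Sum>v\<in>M. (sqrt (w v) * r v)^2)"
  have CS: "(\<Sum>v\<in>M. p v * r v)^2 \<le> A * B"
  proof -
    have "(\<Sum>v\<in>M. p v * r v) = (\<Sum>v\<in>M. (p v / sqrt (w v)) * (sqrt (w v) * r v))"
    proof (rule sum.cong[OF refl])
      fix v
      have "sqrt (w v) \<noteq> 0" using wpos[of v] by simp
      then show "p v * r v = (p v / sqrt (w v)) * (sqrt (w v) * r v)" by simp
    qed
    then show ?thesis unfolding A_def B_def using cs_sum by metis
  qed
  have Bc: "B \<le> c^2"
  proof -
    have "B = (\<Sum>v\<in>M. w v * (r v * r v))"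
      unfolding B_def using wpos by (intro sum.cong refl) (simp add: power_mult_distrib power2_eq_square less_imp_le)
    also have "\<dots> \<le> (\<Sum>v\<in>M. w v * r v)"
      using wpos r0 r1 by (intro sum_mono mult_left_mono) (auto simp: less_imp_le intro: mult_left_le_one_le)
    also have "\<dots> \<le> (\<Sum>v\<in>UNIV. w v * r v)"
      using wpos r0 by (intro sum_mono2) (auto intro: mult_nonneg_nonneg less_imp_le)
    also have "\<dots> = (\<Sum>x\<in>S. \<Sum>v\<in>UNIV. w v * mpow Q s v x)"
      unfolding r_def sum_distrib_left by (rule sum.swap)
    also have "\<dots> = (\<Sum>x\<in>S. w x)"
    proof (rule sum.cong[OF refl])
      fix x
      have "(\<Sum>v\<in>UNIV. w v * mpow Q s v x) = (\<Sum>v\<in>UNIV. w x * mpow Q s x v)"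
        using Qrevpow by (intro sum.cong refl) metis
      also have "\<dots> = w x" using mpow_rowsum[OF Qrow] by (simp add: sum_distrib_left[symmetric])
      finally show "(\<Sum>v\<in>UNIV. w v * mpow Q s v x) = w x" .
    qed
    also have "\<dots> = ps / (1 - qS)"
      unfolding ps_def w_def q_def by (simp add: sum_divide_distrib)
    also have "\<dots> = c^2" using pspos assms(8) by (simp add: c_def)
    finally show ?thesis .
  qed
  have "(\<Sum>v\<in>M. p v * r v) \<le> sqrt (c^2 * A)"
  proof -
    have "(\<Sum>v\<in>M. p v * r v)^2 \<le> c^2 * A"
      using CS Bc A0 by (smt (verit) mult.commute mult_right_mono)
    then show ?thesis using real_le_rsqrt by blast
  qed
  then show ?thesis using LHS RHS unfolding Q_def D_def \<sigma>_def by simp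
qed

end
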